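(* For every regular expression $R$ and every database $D$, $\llbracket R\rrbracket_{BT}(D)=\pi_D\circ\mathrm{bindingtrail}\circ\mathrm{match}_{\mathcal{A}}(D)$ (as bags), where $\mathcal{A}=Gl(R)$, $\mathrm{match}_{\mathcal{A}}(D)$ is the bag of all runs of $D\times\mathcal{A}$, and $\mathrm{bindingtrail}$ is the filter keeping exactly the runs $(n_0,q_0)(e_0,\delta_0)(n_1,q_1)\cdots(e_{k-1},\delta_{k-1})(n_k,q_k)$ in which the pairs $(e_i,q_{i+1})$, $0\le i<k$, are pairwise distinct.
   Context: A database is $D=(\Sigma,V,E,\mathrm{src},\mathrm{tgt},\mathrm{lbl})$ with finite alphabet $\Sigma$, finite vertex set $V$, finite edge set $E$, $\mathrm{src},\mathrm{tgt}:E\to V$, $\mathrm{lbl}:E\to2^\Sigma$; walks are alternating sequences $(n_0,e_0,\dots,e_{k-1},n_k)$ with $\mathrm{src}(e_i)=n_i$, $\mathrm{tgt}(e_i)=n_{i+1}$, and $\mathrm{lbl}(w)=\{u_0\cdots u_{k-1}:u_i\in\mathrm{lbl}(e_i)\}$. Regular expressions over $\Sigma$: $R::=\varepsilon\mid a\mid R^*\mid R\cdot R\mid R+R$ ($a\in\Sigma$). A linearisation $R'$ of $R$ replaces each atom occurrence by a distinct fresh symbol (a position) from an alphabet $\Gamma$; for $\alpha\in\Gamma$, $\overline{\alpha}\in\Sigma$ is the letter it replaced, extended to words. The Glushkov automaton $Gl(R)$ is the trim part of $(\Sigma,\{i\}\uplus\Gamma,\Delta,\{i\},F)$ with $\Delta=\{(\alpha,\overline\beta,\beta):\exists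 u,v\in\Gamma^*,\ u\alpha\beta v\in L(R')\}\cup\{(i,\overline\alpha,\alpha):\exists u\in\Gamma^*,\ \alpha u\in L(R')\}$ and $F=\{\alpha:\exists u,\ u\alpha\in L(R')\}\cup(\{i\}$ if $\varepsilon\in L(R'))$. For an automaton $\mathcal{A}=(\Sigma,Q,\Delta,I,F)$ the run database $D\times\mathcal{A}$ has vertices $V\times Q$ and edges $(e,\delta)$ with $e\in E$, $\delta=(q,a,q')\in\Delta$, $a\in\mathrm{lbl}(e)$, from $(\mathrm{src}(e),q)$ to $(\mathrm{tgt}(e),q')$; runs are its walks from $V\times I$ to $V\times F$; $\pi_D$ projects to $D$. A binding trail of $D$ matching $R$ is a sequence $(e_1,\alpha_1)\cdots(e_n,\alpha_n)\in(E\times\Gamma)^*$ such that $e_1\cdots e_n$ forms a walk of $D$, $\overline{\alpha_1\cdots\alpha_n}\in\mathrm{lbl}(e_1\cdots e_n)$, $\alpha_1\cdots\alpha_n\in L(R')$, and the pairs $(e_i,\alpha_i)$ are pairwise distinct. The binding-trail semantics $\llbracket R\rrbracket_{BT}(D)$ is the bag of projections $\pi_D$ (onto the walk $e_1\cdots e_n$) of all binding trails of $D$ matching $R$. *)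

theory Defs
  imports Main "HOL-Library.Extended_Nat"
begin

record ('s,'v,'e) db =
  alph  :: "'s set"
  verts :: "'v set"
  edges :: "'e set"
  src   :: "'e \<Rightarrow> 'v"
  tgt   :: "'e \<Rightarrow> 'v"
  lbl   :: "'e \<Rightarrow> 's set"

definition wf_db :: "('s,'v,'e) db \<Rightarrow> bool" where
  "wf_db D \<longleftrightarrow> finite (alph D) \<and> finite (verts D) \<and> finite (edges D)
     \<and> src D ` edges D \<subseteq> verts D \<and> tgt D ` edges D \<subseteq> verts D
     \<and> (\<forall>e\<in>edges D. lbl D e \<subseteq> alph D)"

text \<open>A walk (n0,e0,n1,...,e_{k-1},nk) is represented by its start vertex n0 and
  its edge list [e0,...,e_{k-1}]; the intermediate vertices are determined.\<close>

fun chain :: "('s,'v,'e) db \<Rightarrow> 'v \<Rightarrow> 'e list \<Rightarrow> bool" where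
  "chain D n [] = True"
| "chain D n (e # es) \<longleftrightarrow> src D e = n \<and> chain D (tgt D e) es"

definition is_walk :: "('s,'v,'e) db \<Rightarrow> 'v \<times> 'e list \<Rightarrow> bool" where
  "is_walk D w \<longleftrightarrow> fst w \<in> verts D \<and> set (snd w) \<subseteq> edges D \<and> chain D (fst w) (snd w)"

definition walk_end :: "('s,'v,'e) db \<Rightarrow> 'v \<times> 'e list \<Rightarrow> 'v" where
  "walk_end D w = (if snd w = [] then fst w else tgt D (last (snd w)))"

definition in_walk_lbl :: "('s,'v,'e) db \<Rightarrow> 's list \<Rightarrow> 'e list \<Rightarrow> bool" where
  "in_walk_lbl D u es \<longleftrightarrow> list_all2 (\<lambda>a e. a \<in> lbl D e) u es"

text \<open>Bags are represented by multiplicity functions into enat (possibly infinite).\<close>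

definition bag_count :: "'x set \<Rightarrow> enat" where
  "bag_count S = (if finite S then enat (card S) else \<infinity>)"

definition bag_image :: "('x \<Rightarrow> 'y) \<Rightarrow> 'x set \<Rightarrow> 'y \<Rightarrow> enat" where
  "bag_image f S = (\<lambda>y. bag_count {x \<in> S. f x = y})"

datatype 'a rexp = Eps | Atom 'a | Star "'a rexp" | Conc "'a rexp" "'a rexp" | Plus "'a rexp" "'a rexp"

fun atoms :: "'a rexp \<Rightarrow> 'a set" where
  "atoms Eps = {}"
| "atoms (Atom a) = {a}"
| "atoms (Star r) = atoms r"
| "atoms (Conc r s) = atoms r \<union> atoms s"
| "atoms (Plus r s) = atoms r \<union> atoms s"

inductive_set star_lang :: "'a list set \<Rightarrow> 'a list set" for L where
  star_nil: "[] \<in> star_lang L"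
| star_app: "u \<in> L \<Longrightarrow> v \<in> star_lang L \<Longrightarrow> u @ v \<in> star_lang L"

fun lang :: "'a rexp \<Rightarrow> 'a list set" where
  "lang Eps = {[]}"
| "lang (Atom a) = {[a]}"
| "lang (Star r) = star_lang (lang r)"
| "lang (Conc r s) = {u @ v | u v. u \<in> lang r \<and> v \<in> lang s}"
| "lang (Plus r s) = lang r \<union> lang s"

text \<open>Linearisation: the k-th atom occurrence (left to right, from 0) labelled a
  becomes the position (k,a); hence distinct occurrences get distinct positions,
  and the letter replaced by position \<alpha> is snd \<alpha>.\<close>

fun linf :: "nat \<Rightarrow> 'a rexp \<Rightarrow> (nat \<times> 'a) rexp \<times> nat" where
  "linf n Eps = (Eps, n)"
| "linf n (Atom a) = (Atom (n, a), Suc n)"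
| "linf n (Star r) = (let (r', m) = linf n r in (Star r', m))"
| "linf n (Conc r s) = (let (r', m) = linf n r; (s', k) = linf m s in (Conc r' s', k))"
| "linf n (Plus r s) = (let (r', m) = linf n r; (s', k) = linf m s in (Plus r' s', k))"

definition lin :: "'a rexp \<Rightarrow> (nat \<times> 'a) rexp" where
  "lin R = fst (linf 0 R)"

abbreviation ovl :: "nat \<times> 'a \<Rightarrow> 'a" where
  "ovl \<alpha> \<equiv> snd \<alpha>"

record ('s,'q) nfa =
  states :: "'q set"
  trans  :: "('q \<times> 's \<times> 'q) set"
  init   :: "'q set"
  final  :: "'q set"

definition step_rel :: "('s,'q) nfa \<Rightarrow> ('q \<times> 'q) set" where
  "step_rel A = {(q, q'). \<exists>a. (q, a, q') \<in> trans A}"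

definition useful :: "('s,'q) nfa \<Rightarrow> 'q set" where
  "useful A = {q \<in> states A. (\<exists>p\<in>init A. (p, q) \<in> (step_rel A)\<^sup>*)
                            \<and> (\<exists>f\<in>final A. (q, f) \<in> (step_rel A)\<^sup>*)}"

definition trim :: "('s,'q) nfa \<Rightarrow> ('s,'q) nfa" where
  "trim A = \<lparr> states = useful A,
              trans = {(q, a, q') \<in> trans A. q \<in> useful A \<and> q' \<in> useful A},
              init = init A \<inter> useful A,
              final = final A \<inter> useful A \<rparr>"

text \<open>States: None is the initial state i, Some \<alpha> is position \<alpha>.\<close>
definition glushkov_full :: "'a rexp \<Rightarrow> ('a, (nat \<times> 'a) option) nfa" where
  "glushkov_full R = (let R' = lin R; \<Gamma> = atoms R' in
     \<lparr> states = {None} \<union> Some ` \<Gamma>,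
       trans = {(Some \<alpha>, ovl \<beta>, Some \<beta>) | \<alpha> \<beta>. \<alpha> \<in> \<Gamma> \<and> \<beta> \<in> \<Gamma> \<and>
                   (\<exists>u v. u @ [\<alpha>, \<beta>] @ v \<in> lang R')}
             \<union> {(None, ovl \<alpha>, Some \<alpha>) | \<alpha>. \<alpha> \<in> \<Gamma> \<and> (\<exists>u. \<alpha> # u \<in> lang R')},
       init = {None},
       final = {Some \<alpha> | \<alpha>. \<alpha> \<in> \<Gamma> \<and> (\<exists>u. u @ [\<alpha>] \<in> lang R')}
               \<union> (if [] \<in> lang R' then {None} else {}) \<rparr>)"

definition Gl :: "'a rexp \<Rightarrow> ('a, (nat \<times> 'a) option) nfa" where
  "Gl R = trim (glushkov_full R)"

definition run_db :: "('s,'v,'e) db \<Rightarrow> ('s,'q) nfa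
                      \<Rightarrow> ('s, 'v \<times> 'q, 'e \<times> ('q \<times> 's \<times> 'q)) db" where
  "run_db D A = \<lparr> alph = alph D,
     verts = verts D \<times> states A,
     edges = {(e, \<delta>). e \<in> edges D \<and> \<delta> \<in> trans A \<and> fst (snd \<delta>) \<in> lbl D e},
     src = (\<lambda>(e, (q, a, q')). (src D e, q)),
     tgt = (\<lambda>(e, (q, a, q')). (tgt D e, q')),
     lbl = (\<lambda>(e, (q, a, q')). {a}) \<rparr>"

text \<open>match_A(D): the set (= bag, each run occurring once) of all runs of D \<times> A.\<close>
definition match :: "('s,'q) nfa \<Rightarrow> ('s,'v,'e) db
                     \<Rightarrow> (('v \<times> 'q) \<times> ('e \<times> ('q \<times> 's \<times> 'q)) list) set" where
  "match A D = {r. is_walk (run_db D A) r \<and> snd (fst r) \<in> init A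
                   \<and> snd (walk_end (run_db D A) r) \<in> final A}"

definition proj_run :: "(('v \<times> 'q) \<times> ('e \<times> ('q \<times> 's \<times> 'q)) list) \<Rightarrow> 'v \<times> 'e list" where
  "proj_run r = (fst (fst r), map fst (snd r))"

definition bindingtrail :: "(('v \<times> 'q) \<times> ('e \<times> ('q \<times> 's \<times> 'q)) list) set
                            \<Rightarrow> (('v \<times> 'q) \<times> ('e \<times> ('q \<times> 's \<times> 'q)) list) set" where
  "bindingtrail S = {r \<in> S. distinct (map (\<lambda>(e, (q, a, q')). (e, q')) (snd r))}"

text \<open>A binding trail is recorded together with the start vertex of its walk
  (needed for the empty trail, whose walk is a single vertex).\<close>
definition is_binding_trail :: "('a,'v,'e) db \<Rightarrow> 'a rexp \<Rightarrow> 'v \<times> ('e \<times> (nat \<times> 'a)) list \<Rightarrow> bool" where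
  "is_binding_trail D R t \<longleftrightarrow>
     is_walk D (fst t, map fst (snd t))
     \<and> in_walk_lbl D (map (\<lambda>x. ovl (snd x)) (snd t)) (map fst (snd t))
     \<and> map snd (snd t) \<in> lang (lin R)
     \<and> distinct (snd t)"

definition proj_bt :: "'v \<times> ('e \<times> (nat \<times> 'a)) list \<Rightarrow> 'v \<times> 'e list" where
  "proj_bt t = (fst t, map fst (snd t))"

definition BT_sem :: "'a rexp \<Rightarrow> ('a,'v,'e) db \<Rightarrow> 'v \<times> 'e list \<Rightarrow> enat" where
  "BT_sem R D = bag_image proj_bt {t. is_binding_trail D R t}"

end

theory Submission
  imports Defs
begin


definition firsts :: "'a list set \<Rightarrow> 'a set" where "firsts L = {a. \<exists>u. a # u \<in> L}"
definition lasts :: "'a list set \<Rightarrow> 'a set" where "lasts L = {a. \<exists>u. u @ [a] \<in> L}"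
definition follows :: "'a list set \<Rightarrow> ('a \<times> 'a) set" where
  "follows L = {(a,b). \<exists>u v. u @ [a,b] @ v \<in> L}"

fun fchain :: "('a \<times> 'a) set \<Rightarrow> 'a list \<Rightarrow> bool" where
  "fchain F (a # b # w) = ((a,b) \<in> F \<and> fchain F (b # w))"
| "fchain F _ = True"

fun linear :: "'a rexp \<Rightarrow> bool" where
  "linear (Star r) = linear r"
| "linear (Conc r s) = (linear r \<and> linear s \<and> atoms r \<inter> atoms s = {})"
| "linear (Plus r s) = (linear r \<and> linear s \<and> atoms r \<inter> atoms s = {})"
| "linear _ = True"

lemma star_atoms: assumes "w \<in> star_lang L" "\<And>x. x \<in> L \<Longrightarrow> set x \<subseteq> A" shows "set w \<subseteq> A"
  using assms(1) by induction (auto dest: assms(2))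

lemma lang_atoms: "w \<in> lang r \<Longrightarrow> set w \<subseteq> atoms r"
proof (induction r arbitrary: w)
  case (Star r)
  then show ?case using star_atoms[of w "lang r" "atoms r"] by auto
next
  case (Conc r s)
  then show ?case by fastforce
next
  case (Plus r s)
  then show ?case by fastforce
qed auto

lemma firsts_atoms: "firsts (lang r) \<subseteq> atoms r"
  by (auto simp: firsts_def dest: lang_atoms)
lemma lasts_atoms: "lasts (lang r) \<subseteq> atoms r"
  by (auto simp: lasts_def dest: lang_atoms)
lemma follows_atoms: "follows (lang r) \<subseteq> atoms r \<times> atoms r"
  by (auto simp: follows_def dest: lang_atoms)

lemma fchain_append: "fchain F (x @ y) \<longleftrightarrow> fchain F x \<and> fchain F y \<and> (x \<noteq> [] \<and> y \<noteq> [] \<longrightarrow> (last x, hd y) \<in> F)"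
  apply (induction F x rule: fchain.induct)
    apply auto
  apply (cases y; auto)+
  done

lemma fchain_closed: "fchain F w \<Longrightarrow> w \<noteq> [] \<Longrightarrow> hd w \<in> A \<Longrightarrow> (\<And>a b. (a,b) \<in> F \<Longrightarrow> a \<in> A \<Longrightarrow> b \<in> A) \<Longrightarrow> set w \<subseteq> A"
  by (induction F w rule: fchain.induct) auto

lemma fchain_mono: "fchain F w \<Longrightarrow> set w \<subseteq> A \<Longrightarrow> (\<And>a b. (a,b) \<in> F \<Longrightarrow> a \<in> A \<Longrightarrow> b \<in> A \<Longrightarrow> (a,b) \<in> G) \<Longrightarrow> fchain G w"
  by (induction F w rule: fchain.induct) auto

lemma fchain_split: "\<not> fchain F w \<Longrightarrow> \<exists>x y. w = x @ y \<and> x \<noteq> [] \<and> y \<noteq> [] \<and> fchain F x \<and> (last x, hd y) \<notin> F"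
proof (induction F w rule: fchain.induct)
  case (1 F a b w)
  show ?case
  proof (cases "(a,b) \<in> F")
    case False
    then show ?thesis by (intro exI[of _ "[a]"] exI[of _ "b # w"]) auto
  next
    case True
    with 1 obtain x y where xy: "b # w = x @ y" "x \<noteq> []" "y \<noteq> []" "fchain F x" "(last x, hd y) \<notin> F"
      by auto
    then obtain x' where x': "x = b # x'" by (cases x) auto
    show ?thesis
      by (rule exI[of _ "a # x"], rule exI[of _ y]) (use xy x' True in auto)
  qed
qed auto

lemma split3: "u @ [a,b] @ v = p @ q \<Longrightarrow> (\<exists>v'. p = u @ [a,b] @ v') \<or> (\<exists>u'. q = u' @ [a,b] @ v) \<or> (p = u @ [a] \<and> q = b # v)"
  by (auto simp: append_eq_append_conv2 Cons_eq_append_conv)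

lemma snoc_split: "u @ [a] = x @ y \<Longrightarrow> (y = [] \<and> x = u @ [a]) \<or> (\<exists>y'. y = y' @ [a])"
  by (cases y rule: rev_cases) auto

lemma firsts_conc: "a \<in> firsts (lang (Conc r s)) \<Longrightarrow> a \<in> firsts (lang r) \<or> ([] \<in> lang r \<and> a \<in> firsts (lang s))"
  by (auto simp: firsts_def Cons_eq_append_conv)

lemma lasts_conc: "a \<in> lasts (lang (Conc r s)) \<Longrightarrow> a \<in> lasts (lang s) \<or> ([] \<in> lang s \<and> a \<in> lasts (lang r))"
  by (auto simp: lasts_def dest!: snoc_split)

lemma follows_conc: "(a,b) \<in> follows (lang (Conc r s)) \<Longrightarrow> (a,b) \<in> follows (lang r) \<or> (a,b) \<in> follows (lang s) \<or> (a \<in> lasts (lang r) \<and> b \<in> firsts (lang s))"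
proof -
  assume "(a,b) \<in> follows (lang (Conc r s))"
  then obtain u v x y where e: "u @ [a,b] @ v = x @ y" "x \<in> lang r" "y \<in> lang s"
    by (auto simp: follows_def)
  from split3[OF e(1)] show ?thesis
  proof (elim disjE exE conjE)
    fix v' assume "x = u @ [a,b] @ v'"
    then show ?thesis using e by (auto simp: follows_def)
  next
    fix u' assume "y = u' @ [a,b] @ v"
    then show ?thesis using e by (auto simp: follows_def)
  next
    assume "x = u @ [a]" "y = b # v"
    then show ?thesis using e by (auto simp: lasts_def firsts_def)
  qed
qed

lemma firsts_Un: "firsts (A \<union> B) = firsts A \<union> firsts B" by (auto simp: firsts_def)
lemma lasts_Un: "lasts (A \<union> B) = lasts A \<union> lasts B" by (auto simp: lasts_def)
lemma follows_Un: "follows (A \<union> B) = follows A \<union> follows B" by (auto simp: follows_def)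

lemma firsts_star: "w \<in> star_lang L \<Longrightarrow> w \<noteq> [] \<Longrightarrow> hd w \<in> firsts L"
proof (induction rule: star_lang.induct)
  case (star_app u v)
  show ?case
  proof (cases "u = []")
    case True
    with star_app show ?thesis by simp
  next
    case False
    with star_app(1) show ?thesis by (cases u) (auto simp: firsts_def)
  qed
qed simp

lemma lasts_star: "w \<in> star_lang L \<Longrightarrow> w \<noteq> [] \<Longrightarrow> last w \<in> lasts L"
proof (induction rule: star_lang.induct)
  case (star_app u v)
  show ?case
  proof (cases "v = []")
    case True
    with star_app show ?thesis by (cases u rule: rev_cases) (auto simp: lasts_def)
  next
    case False
    with star_app show ?thesis by simp
  qed
qed simp

lemma follows_star: "w \<in> star_lang L \<Longrightarrow> w = u @ [a,b] @ v \<Longrightarrow> (a,b) \<in> follows L \<or> (a \<in> lasts L \<and> b \<in> firsts L)"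
proof (induction arbitrary: u rule: star_lang.induct)
  case (star_app x y)
  from split3[OF star_app.prems[symmetric]] show ?case
  proof (elim disjE exE conjE)
    fix v' assume "x = u @ [a,b] @ v'"
    then show ?thesis using star_app by (auto simp: follows_def)
  next
    fix u' assume "y = u' @ [a,b] @ v"
    then show ?thesis using star_app by blast
  next
    assume "x = u @ [a]" "y = b # v"
    then show ?thesis using star_app firsts_star[of y L] by (auto simp: lasts_def)
  qed
qed simp



lemma follows_atomsD1: "(a,b) \<in> follows (lang r) \<Longrightarrow> a \<in> atoms r" using follows_atoms[of r] by blast
lemma follows_atomsD2: "(a,b) \<in> follows (lang r) \<Longrightarrow> b \<in> atoms r" using follows_atoms[of r] by blast
lemma firsts_atomsD: "a \<in> firsts (lang r) \<Longrightarrow> a \<in> atoms r" using firsts_atoms[of r] by blast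
lemma lasts_atomsD: "a \<in> lasts (lang r) \<Longrightarrow> a \<in> atoms r" using lasts_atoms[of r] by blast

lemma plus_aux:
  assumes disj: "atoms r \<inter> atoms s = {}"
    and IH: "\<And>w. w \<noteq> [] \<Longrightarrow> hd w \<in> firsts (lang r) \<Longrightarrow> last w \<in> lasts (lang r) \<Longrightarrow> fchain (follows (lang r)) w \<Longrightarrow> w \<in> lang r"
    and w: "w \<noteq> []" "hd w \<in> firsts (lang r)" "last w \<in> lasts (lang r) \<union> lasts (lang s)"
      "fchain (follows (lang r) \<union> follows (lang s)) w"
  shows "w \<in> lang r"
proof -
  have sw: "set w \<subseteq> atoms r"
    using fchain_closed[OF w(4) w(1), of "atoms r"] w(2) firsts_atoms[of r] follows_atoms[of r]
      follows_atoms[of s] disj by blast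
  have "last w \<in> atoms r" using sw w(1) by auto
  then have "last w \<in> lasts (lang r)" using w(3) lasts_atoms[of s] disj by blast
  moreover have "fchain (follows (lang r)) w"
    using fchain_mono[OF w(4) sw, of "follows (lang r)"] follows_atoms[of s] disj by blast
  ultimately show ?thesis using IH w by blast
qed

lemma local_lang:
  "linear r \<Longrightarrow> w \<noteq> [] \<Longrightarrow> hd w \<in> firsts (lang r) \<Longrightarrow> last w \<in> lasts (lang r)
   \<Longrightarrow> fchain (follows (lang r)) w \<Longrightarrow> w \<in> lang r"
proof (induction r arbitrary: w)
  case Eps
  then show ?case by (auto simp: firsts_def)
next
  case (Atom c)
  have "follows (lang (Atom c)) = {}" by (auto simp: follows_def Cons_eq_append_conv)
  moreover have "firsts (lang (Atom c)) = {c}" by (auto simp: firsts_def)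
  moreover obtain a w' where "w = a # w'" using Atom.prems(2) by (cases w) auto
  ultimately show ?case using Atom by (cases w') auto
next
  case (Plus r s)
  have lin: "linear r" "linear s" "atoms r \<inter> atoms s = {}" using Plus.prems(1) by auto
  have h: "hd w \<in> firsts (lang r) \<or> hd w \<in> firsts (lang s)" using Plus.prems(3) by (simp add: firsts_Un)
  have l: "last w \<in> lasts (lang r) \<union> lasts (lang s)" using Plus.prems(4) by (simp add: lasts_Un)
  have f: "fchain (follows (lang r) \<union> follows (lang s)) w" using Plus.prems(5) by (simp add: follows_Un)
  from h show ?case
  proof
    assume "hd w \<in> firsts (lang r)"
    then have "w \<in> lang r" using plus_aux[OF lin(3) Plus.IH(1)[OF lin(1)] Plus.prems(2) _ l f] by blast
    then show ?thesis by simp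
  next
    assume "hd w \<in> firsts (lang s)"
    then have "w \<in> lang s"
      apply (intro plus_aux[where r=s and s=r, OF _ Plus.IH(2)[OF lin(2)] Plus.prems(2)])
      using l f lin(3) by (auto simp: Un_commute Int_commute)
    then show ?thesis by simp
  qed
next
  case (Conc r s)
  let ?F = "follows (lang (Conc r s))"
  have lin: "linear r" "linear s" using Conc.prems(1) by auto
  have D: "\<And>c. c \<in> atoms r \<Longrightarrow> c \<in> atoms s \<Longrightarrow> False" using Conc.prems(1) by auto
  have Fsub: "\<And>a b. (a,b) \<in> ?F \<Longrightarrow> (a,b) \<in> follows (lang r) \<or> (a,b) \<in> follows (lang s) \<or> (a \<in> lasts (lang r) \<and> b \<in> firsts (lang s))"
    by (rule follows_conc)
  have fw: "fchain ?F w" using Conc.prems(5) .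
  have allw: "set w \<subseteq> atoms (Conc r s)"
  proof (rule fchain_closed[OF fw Conc.prems(2)])
    show "hd w \<in> atoms (Conc r s)" by (rule firsts_atomsD[OF Conc.prems(3)])
    fix a b assume "(a,b) \<in> ?F"
    then show "b \<in> atoms (Conc r s)" by (rule follows_atomsD2)
  qed
  define x where "x = takeWhile (\<lambda>c. c \<in> atoms r) w"
  define y where "y = dropWhile (\<lambda>c. c \<in> atoms r) w"
  have w: "w = x @ y" by (simp add: x_def y_def)
  have xr: "set x \<subseteq> atoms r" by (auto simp: x_def dest: set_takeWhileD)
  have fxy: "fchain ?F x" "fchain ?F y" "x \<noteq> [] \<Longrightarrow> y \<noteq> [] \<Longrightarrow> (last x, hd y) \<in> ?F"
    using fw w by (simp_all add: fchain_append)
  have ys: "set y \<subseteq> atoms s"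
  proof (cases "y = []")
    case False
    then have "hd y \<notin> atoms r" using hd_dropWhile[of "\<lambda>c. c \<in> atoms r" w] y_def by simp
    moreover have "hd y \<in> set w" using False w by simp
    ultimately have hy: "hd y \<in> atoms s" using allw by auto
    show ?thesis
    proof (rule fchain_closed[OF fxy(2) False hy])
      fix a b assume ab: "(a,b) \<in> ?F" "a \<in> atoms s"
      from Fsub[OF ab(1)] show "b \<in> atoms s"
      proof (elim disjE conjE)
        assume "(a,b) \<in> follows (lang r)" then show ?thesis using ab(2) D by (blast dest: follows_atomsD1)
      next
        assume "(a,b) \<in> follows (lang s)" then show ?thesis by (rule follows_atomsD2)
      next
        assume "a \<in> lasts (lang r)" then show ?thesis using ab(2) D by (blast dest: lasts_atomsD)
      qed
    qed
  qed simp
  have fx: "fchain (follows (lang r)) x"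
  proof (rule fchain_mono[OF fxy(1) xr])
    fix a b assume ab: "(a,b) \<in> ?F" "a \<in> atoms r" "b \<in> atoms r"
    from Fsub[OF ab(1)] show "(a,b) \<in> follows (lang r)"
    proof (elim disjE conjE)
      assume "(a,b) \<in> follows (lang s)" then show ?thesis using ab(2) D by (blast dest: follows_atomsD1)
    next
      assume "b \<in> firsts (lang s)" then show ?thesis using ab(3) D by (blast dest: firsts_atomsD)
    qed
  qed
  have fy: "fchain (follows (lang s)) y"
  proof (rule fchain_mono[OF fxy(2) ys])
    fix a b assume ab: "(a,b) \<in> ?F" "a \<in> atoms s" "b \<in> atoms s"
    from Fsub[OF ab(1)] show "(a,b) \<in> follows (lang s)"
    proof (elim disjE conjE)
      assume "(a,b) \<in> follows (lang r)" then show ?thesis using ab(2) D by (blast dest: follows_atomsD1)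
    next
      assume "a \<in> lasts (lang r)" then show ?thesis using ab(2) D by (blast dest: lasts_atomsD)
    qed
  qed
  have IHr: "\<And>w. w \<noteq> [] \<Longrightarrow> hd w \<in> firsts (lang r) \<Longrightarrow> last w \<in> lasts (lang r) \<Longrightarrow> fchain (follows (lang r)) w \<Longrightarrow> w \<in> lang r"
    using Conc.IH(1) lin(1) by blast
  have IHs: "\<And>w. w \<noteq> [] \<Longrightarrow> hd w \<in> firsts (lang s) \<Longrightarrow> last w \<in> lasts (lang s) \<Longrightarrow> fchain (follows (lang s)) w \<Longrightarrow> w \<in> lang s"
    using Conc.IH(2) lin(2) by blast
  have hw: "hd w \<in> firsts (lang r) \<or> ([] \<in> lang r \<and> hd w \<in> firsts (lang s))"
    by (rule firsts_conc[OF Conc.prems(3)])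
  have lw: "last w \<in> lasts (lang s) \<or> ([] \<in> lang s \<and> last w \<in> lasts (lang r))"
    by (rule lasts_conc[OF Conc.prems(4)])
  show ?case
  proof (cases "x = []")
    case True
    then have yw: "y = w" using w by simp
    then have hs: "hd w \<in> atoms s" "last w \<in> atoms s" using ys Conc.prems(2) by auto
    have 1: "[] \<in> lang r \<and> hd w \<in> firsts (lang s)" using hw hs(1) D by (blast dest: firsts_atomsD)
    have 2: "last w \<in> lasts (lang s)" using lw hs(2) D by (blast dest: lasts_atomsD)
    have "w \<in> lang s" using IHs[OF Conc.prems(2) conjunct2[OF 1] 2] fy yw by simp
    then have "[] @ w \<in> lang (Conc r s)" using 1 by (simp only: lang.simps) blast
    then show ?thesis by simp
  next
    case xne: False
    then have hx: "hd x = hd w" "hd x \<in> atoms r" using w xr by auto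
    have "hd x \<notin> atoms s" using hx(2) D by blast
    then have hx': "hd x \<in> firsts (lang r)" using hw hx(1) firsts_atomsD[of "hd w" s] by auto
    show ?thesis
    proof (cases "y = []")
      case True
      then have xw: "x = w" using w by simp
      then have "last w \<in> atoms r" using xr Conc.prems(2) by auto
      then have "last w \<notin> atoms s" using D by blast
      then have 1: "[] \<in> lang s \<and> last w \<in> lasts (lang r)" using lw lasts_atomsD[of "last w" s] by auto
      have "w \<in> lang r" using IHr[OF Conc.prems(2) _ conjunct2[OF 1]] fx xw hx' hx by simp
      then have "w @ [] \<in> lang (Conc r s)" using 1 by (simp only: lang.simps) blast
      then show ?thesis by simp
    next
      case yne: False
      have lx: "last x \<in> atoms r" and hy: "hd y \<in> atoms s" using xne yne xr ys by auto
      have j: "last x \<in> lasts (lang r) \<and> hd y \<in> firsts (lang s)"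
        using Fsub[OF fxy(3)[OF xne yne]]
      proof (elim disjE)
        assume "(last x, hd y) \<in> follows (lang r)" then have "hd y \<in> atoms r" by (rule follows_atomsD2)
        then show ?thesis using hy D by blast
      next
        assume "(last x, hd y) \<in> follows (lang s)" then have "last x \<in> atoms s" by (rule follows_atomsD1)
        then show ?thesis using lx D by blast
      qed
      have "last y \<in> atoms s" using yne ys by auto
      moreover have "last y = last w" using w yne by simp
      ultimately have "last w \<notin> atoms r" "last y = last w" using D by metis+
      then have "last y \<in> lasts (lang s)" using lw lasts_atomsD[of "last w" r] by auto
      then have "y \<in> lang s" using IHs[OF yne conjunct2[OF j] _ fy] by blast
      moreover have "x \<in> lang r" using IHr[OF xne hx' conjunct1[OF j] fx] .
      ultimately show ?thesis using w by auto
    qed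
  qed
next
  case (Star r)
  have IH: "\<And>w. w \<noteq> [] \<Longrightarrow> hd w \<in> firsts (lang r) \<Longrightarrow> last w \<in> lasts (lang r) \<Longrightarrow> fchain (follows (lang r)) w \<Longrightarrow> w \<in> lang r"
    using Star.IH Star.prems(1) by auto
  have F: "\<And>a b. (a,b) \<in> follows (lang (Star r)) \<Longrightarrow> (a,b) \<in> follows (lang r) \<or> (a \<in> lasts (lang r) \<and> b \<in> firsts (lang r))"
  proof -
    fix a b assume "(a,b) \<in> follows (lang (Star r))"
    then obtain u v where "u @ [a,b] @ v \<in> star_lang (lang r)" by (auto simp: follows_def)
    from follows_star[OF this refl] show "?thesis a b" .
  qed
  have main: "w \<noteq> [] \<Longrightarrow> hd w \<in> firsts (lang r) \<Longrightarrow> last w \<in> lasts (lang r) \<Longrightarrow> fchain (follows (lang (Star r))) w \<Longrightarrow> w \<in> star_lang (lang r)" for w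
  proof (induction w rule: length_induct)
    case (1 w)
    show ?case
    proof (cases "fchain (follows (lang r)) w")
      case True
      then have "w \<in> lang r" using IH 1 by auto
      then show ?thesis using star_app[of w "lang r" "[]", OF _ star_nil] by simp
    next
      case False
      then obtain x y where xy: "w = x @ y" "x \<noteq> []" "y \<noteq> []" "fchain (follows (lang r)) x"
          "(last x, hd y) \<notin> follows (lang r)" using fchain_split by blast
      have fw: "fchain (follows (lang (Star r))) y" "(last x, hd y) \<in> follows (lang (Star r))"
        using "1.prems"(4) xy fchain_append by auto
      then have j: "last x \<in> lasts (lang r)" "hd y \<in> firsts (lang r)" using F xy(5) by auto
      have "x \<in> lang r" using IH xy(2,4) j "1.prems"(2) xy(1) by auto
      moreover have "y \<in> star_lang (lang r)"
      proof -
        have lt: "length y < length w" using xy(1,2) by simp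
        have ly: "last y \<in> lasts (lang r)" using "1.prems"(3) xy(1,3) by simp
        show ?thesis using "1.IH"[rule_format, OF lt xy(3) j(2) ly fw(1)] .
      qed
      ultimately show ?thesis using xy(1) star_app by blast
    qed
  qed
  have "hd w \<in> firsts (lang r)"
  proof -
    obtain u where "hd w # u \<in> star_lang (lang r)" using Star.prems(3) by (auto simp: firsts_def)
    from firsts_star[OF this] show ?thesis by simp
  qed
  moreover have "last w \<in> lasts (lang r)"
  proof -
    obtain u where "u @ [last w] \<in> star_lang (lang r)" using Star.prems(4) by (auto simp: lasts_def)
    from lasts_star[OF this] show ?thesis by simp
  qed
  ultimately show ?case using main Star.prems by simp
qed

lemma linf_props: "n \<le> snd (linf n r) \<and> atoms (fst (linf n r)) \<subseteq> {p. n \<le> fst p \<and> fst p < snd (linf n r)} \<and> linear (fst (linf n r))"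
proof (induction r arbitrary: n)
  case (Conc r s)
  obtain r' m where h1: "linf n r = (r', m)" by fastforce
  obtain s' k where h2: "linf m s = (s', k)" by fastforce
  have a: "n \<le> m" "atoms r' \<subseteq> {p. n \<le> fst p \<and> fst p < m}" "linear r'" using Conc.IH(1)[of n] h1 by auto
  have b: "m \<le> k" "atoms s' \<subseteq> {p. m \<le> fst p \<and> fst p < k}" "linear s'" using Conc.IH(2)[of m] h2 by auto
  have "atoms r' \<inter> atoms s' = {}" using a(2) b(2) by fastforce
  then show ?case using a b h1 h2 by fastforce
next
  case (Plus r s)
  obtain r' m where h1: "linf n r = (r', m)" by fastforce
  obtain s' k where h2: "linf m s = (s', k)" by fastforce
  have a: "n \<le> m" "atoms r' \<subseteq> {p. n \<le> fst p \<and> fst p < m}" "linear r'" using Plus.IH(1)[of n] h1 by auto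
  have b: "m \<le> k" "atoms s' \<subseteq> {p. m \<le> fst p \<and> fst p < k}" "linear s'" using Plus.IH(2)[of m] h2 by auto
  have "atoms r' \<inter> atoms s' = {}" using a(2) b(2) by fastforce
  then show ?case using a b h1 h2 by fastforce
next
  case (Star r)
  obtain r' m where h1: "linf n r = (r', m)" by fastforce
  then show ?case using Star.IH[of n] by auto
qed auto

lemma linear_lin: "linear (lin R)"
  using linf_props[of 0 R] by (simp add: lin_def)



fun accs :: "'a list set \<Rightarrow> 'a option \<Rightarrow> 'a list \<Rightarrow> bool" where
  "accs L None [] = ([] \<in> L)"
| "accs L (Some a) [] = (a \<in> lasts L)"
| "accs L None (b # w) = (b \<in> firsts L \<and> accs L (Some b) w)"
| "accs L (Some a) (b # w) = ((a, b) \<in> follows L \<and> accs L (Some b) w)"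

lemma accs_Some: "accs L (Some a) w \<longleftrightarrow> fchain (follows L) (a # w) \<and> last (a # w) \<in> lasts L"
  by (induction w arbitrary: a) auto

lemma accs_complete: "x @ y \<in> L \<Longrightarrow> x \<noteq> [] \<Longrightarrow> accs L (Some (last x)) y"
proof (induction y arbitrary: x)
  case Nil
  then have "butlast x @ [last x] \<in> L" by simp
  then show ?case by (auto simp: lasts_def)
next
  case (Cons b y)
  have "butlast x @ [last x, b] @ y \<in> L"
    using Cons.prems append_butlast_last_id[of x] by (metis append.assoc append_Cons append_Nil)
  then have "(last x, b) \<in> follows L" by (auto simp: follows_def)
  moreover have "accs L (Some b) y" using Cons.IH[of "x @ [b]"] Cons.prems by simp
  ultimately show ?case by simp
qed

lemma accs_iff: "linear r \<Longrightarrow> accs (lang r) None w \<longleftrightarrow> w \<in> lang r"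
proof (cases w)
  case (Cons b w')
  assume lin: "linear r"
  show ?thesis
  proof
    assume "accs (lang r) None w"
    then have b: "b \<in> firsts (lang r)" and a: "accs (lang r) (Some b) w'" using Cons by auto
    from a[unfolded accs_Some] b have "b \<in> firsts (lang r)" "fchain (follows (lang r)) (b # w')" "last (b # w') \<in> lasts (lang r)"
      by auto
    then show "w \<in> lang r" using local_lang[OF lin] Cons by auto
  next
    assume "w \<in> lang r"
    then have "b \<in> firsts (lang r)" using Cons by (auto simp: firsts_def)
    moreover have "accs (lang r) (Some b) w'" using accs_complete[of "[b]" w' "lang r"] Cons \<open>w \<in> lang r\<close> by simp
    ultimately show "accs (lang r) None w" using Cons by simp
  qed
qed simp

fun gpath :: "('a, (nat \<times> 'a) option) nfa \<Rightarrow> (nat \<times> 'a) option \<Rightarrow> (nat \<times> 'a) list \<Rightarrow> bool" where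
  "gpath N q [] = (q \<in> final N)"
| "gpath N q (b # w) = ((q, snd b, Some b) \<in> trans N \<and> gpath N (Some b) w)"

lemma hd_atoms: "b # u \<in> lang r \<Longrightarrow> b \<in> atoms r" using lang_atoms by fastforce
lemma last_atoms: "u @ [b] \<in> lang r \<Longrightarrow> b \<in> atoms r" using lang_atoms by fastforce
lemma pair_atoms: "u @ [a,b] @ v \<in> lang r \<Longrightarrow> a \<in> atoms r \<and> b \<in> atoms r" using lang_atoms by fastforce

lemma transG_None: "(None, c, q') \<in> trans (glushkov_full R) \<longleftrightarrow> (\<exists>b. q' = Some b \<and> c = snd b \<and> b \<in> firsts (lang (lin R)))"
  unfolding glushkov_full_def Let_def firsts_def nfa.select_convs by (blast dest: hd_atoms)

lemma transG_Some: "(Some a, c, q') \<in> trans (glushkov_full R) \<longleftrightarrow> (\<exists>b. q' = Some b \<and> c = snd b \<and> (a,b) \<in> follows (lang (lin R)))"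
  unfolding glushkov_full_def Let_def follows_def nfa.select_convs by (blast dest: pair_atoms)

lemma transG_iff: "(q, snd b, Some b) \<in> trans (glushkov_full R) \<longleftrightarrow>
   (case q of None \<Rightarrow> b \<in> firsts (lang (lin R)) | Some a \<Rightarrow> (a,b) \<in> follows (lang (lin R)))"
  by (cases q) (simp_all add: transG_None transG_Some)

lemma transG_form: "(q, c, q') \<in> trans (glushkov_full R) \<Longrightarrow> \<exists>b. q' = Some b \<and> c = snd b \<and> b \<in> atoms (lin R)"
proof (cases q)
  case None
  assume "(q, c, q') \<in> trans (glushkov_full R)"
  then show ?thesis using None by (auto simp: transG_None dest: firsts_atomsD)
next
  case (Some a)
  assume "(q, c, q') \<in> trans (glushkov_full R)"
  then show ?thesis using Some by (auto simp: transG_Some dest: follows_atomsD2)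
qed

lemma finalG_None: "None \<in> final (glushkov_full R) \<longleftrightarrow> [] \<in> lang (lin R)"
  unfolding glushkov_full_def Let_def nfa.select_convs by auto

lemma finalG_Some: "Some a \<in> final (glushkov_full R) \<longleftrightarrow> a \<in> lasts (lang (lin R))"
  unfolding glushkov_full_def Let_def lasts_def nfa.select_convs
  apply (cases "[] \<in> lang (lin R)")
   apply (simp_all only: if_True if_False)
   apply (blast dest: last_atoms)+
  done

lemmas finalG = finalG_None finalG_Some

lemma statesG1: "None \<in> states (glushkov_full R)"
  by (simp add: glushkov_full_def Let_def)
lemma statesG2: "init (glushkov_full R) = {None}"
  by (simp add: glushkov_full_def Let_def)
lemma statesG3: "b \<in> atoms (lin R) \<Longrightarrow> Some b \<in> states (glushkov_full R)"
  by (simp add: glushkov_full_def Let_def)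
lemmas statesG = statesG1 statesG2 statesG3

lemma gpath_G: "gpath (glushkov_full R) q w \<longleftrightarrow> accs (lang (lin R)) q w"
proof (induction w arbitrary: q)
  case Nil
  show ?case by (cases q) (simp_all add: finalG)
next
  case (Cons b w)
  then show ?case by (cases q) (simp_all add: transG_iff)
qed

lemma gpath_reach: "gpath N q w \<Longrightarrow> \<exists>f\<in>final N. (q,f) \<in> (step_rel N)\<^sup>*"
proof (induction w arbitrary: q)
  case (Cons b w)
  then obtain f where f: "f \<in> final N" "(Some b, f) \<in> (step_rel N)\<^sup>*" by auto
  have "(q, Some b) \<in> step_rel N" using Cons.prems by (auto simp: step_rel_def)
  then have "(q, f) \<in> (step_rel N)\<^sup>*" using f(2) by (rule converse_rtrancl_into_rtrancl)
  then show ?case using f(1) by blast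
next
  case Nil
  then have "q \<in> final N" by simp
  then show ?case by blast
qed

lemma gpath_trim:
  assumes closed: "\<And>q c q'. (q,c,q') \<in> trans N \<Longrightarrow> q' \<in> states N"
  shows "gpath N q w \<Longrightarrow> q \<in> states N \<Longrightarrow> (\<exists>p\<in>init N. (p,q) \<in> (step_rel N)\<^sup>*) \<Longrightarrow> gpath (trim N) q w"
proof (induction w arbitrary: q)
  case Nil
  then have "q \<in> final N" by simp
  then have "q \<in> useful N" unfolding useful_def using Nil.prems(2,3) by blast
  then show ?case using \<open>q \<in> final N\<close> by (simp add: trim_def)
next
  case (Cons b w)
  have t: "(q, snd b, Some b) \<in> trans N" and g: "gpath N (Some b) w" using Cons.prems by auto
  have st: "Some b \<in> states N" using closed[OF t] .
  have step: "(q, Some b) \<in> step_rel N" using t by (auto simp: step_rel_def)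
  obtain p where p: "p \<in> init N" "(p, q) \<in> (step_rel N)\<^sup>*" using Cons.prems(3) by blast
  have "(p, Some b) \<in> (step_rel N)\<^sup>*" using p(2) step by (rule rtrancl_into_rtrancl)
  then have rb: "\<exists>p\<in>init N. (p, Some b) \<in> (step_rel N)\<^sup>*" using p(1) by blast
  have uq: "q \<in> useful N" unfolding useful_def using Cons.prems(2,3) gpath_reach[OF Cons.prems(1)] by blast
  have ub: "Some b \<in> useful N" unfolding useful_def using st rb gpath_reach[OF g] by blast
  have "gpath (trim N) (Some b) w" using Cons.IH[OF g st rb] .
  then show ?case using t uq ub by (simp add: trim_def)
qed

lemma gpath_untrim: "gpath (trim N) q w \<Longrightarrow> gpath N q w"
  by (induction w arbitrary: q) (simp_all add: trim_def)

lemma gpath_useful: "gpath N q w \<Longrightarrow> q \<in> states N \<Longrightarrow> q \<in> init N \<Longrightarrow> q \<in> useful N"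
  unfolding useful_def using gpath_reach[of N q w] by blast

lemma G_lang: "gpath (glushkov_full R) None w \<longleftrightarrow> w \<in> lang (lin R)"
  unfolding gpath_G by (rule accs_iff[OF linear_lin])

lemma closedG: "(q, c, q') \<in> trans (glushkov_full R) \<Longrightarrow> q' \<in> states (glushkov_full R)"
proof -
  assume a: "(q, c, q') \<in> trans (glushkov_full R)"
  from transG_form[OF a] obtain b where b: "q' = Some b" "b \<in> atoms (lin R)" by (elim exE conjE)
  from statesG3[OF b(2)] show ?thesis unfolding b(1) .
qed

lemma Gl_gpath: "gpath (Gl R) None w \<longleftrightarrow> w \<in> lang (lin R)"
proof
  assume "gpath (Gl R) None w"
  then have "gpath (glushkov_full R) None w" unfolding Gl_def by (rule gpath_untrim)
  then show "w \<in> lang (lin R)" unfolding G_lang .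
next
  assume "w \<in> lang (lin R)"
  then have g: "gpath (glushkov_full R) None w" unfolding G_lang .
  have i: "None \<in> init (glushkov_full R)" unfolding statesG2 by (rule singletonI)
  have r: "\<exists>p\<in>init (glushkov_full R). (p, None) \<in> (step_rel (glushkov_full R))\<^sup>*"
    using i rtrancl_refl by (rule bexI[rotated])
  from gpath_trim[OF closedG g statesG1 r] show "gpath (Gl R) None w" unfolding Gl_def .
qed

lemma Gl_None: "w \<in> lang (lin R) \<Longrightarrow> None \<in> states (Gl R) \<and> None \<in> init (Gl R)"
proof -
  assume "w \<in> lang (lin R)"
  then have g: "gpath (glushkov_full R) None w" unfolding G_lang .
  have i: "None \<in> init (glushkov_full R)" unfolding statesG2 by (rule singletonI)
  have "None \<in> useful (glushkov_full R)" using gpath_useful[OF g statesG1 i] .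
  then show ?thesis using i unfolding Gl_def trim_def nfa.select_convs by (intro conjI IntI)
qed

lemma Gl_trans_form: "(q, c, q') \<in> trans (Gl R) \<Longrightarrow> \<exists>b. q' = Some b \<and> c = snd b"
proof -
  assume "(q, c, q') \<in> trans (Gl R)"
  moreover have "trans (Gl R) \<subseteq> trans (glushkov_full R)" unfolding Gl_def trim_def by auto
  ultimately have "(q, c, q') \<in> trans (glushkov_full R)" by (rule subsetD[rotated])
  from transG_form[OF this] show ?thesis by (elim exE conjE) (intro exI conjI)
qed



fun mk :: "(nat \<times> 'a) option \<Rightarrow> ('e \<times> (nat \<times> 'a)) list \<Rightarrow> ('e \<times> ((nat \<times> 'a) option \<times> 'a \<times> (nat \<times> 'a) option)) list" where
  "mk q [] = []"
| "mk q ((e, b) # ps) = (e, (q, snd b, Some b)) # mk (Some b) ps"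

definition lastst :: "'q \<Rightarrow> ('e \<times> ('q \<times> 's \<times> 'q)) list \<Rightarrow> 'q" where
  "lastst q es = (if es = [] then q else snd (snd (snd (last es))))"

lemma lastst_Nil: "lastst q [] = q" by (simp add: lastst_def)
lemma lastst_Cons: "lastst q (x # xs) = lastst (snd (snd (snd x))) xs" by (simp add: lastst_def)

lemma run_db_simps: "verts (run_db D A) = verts D \<times> states A"
  "(e, (p, c, p')) \<in> edges (run_db D A) \<longleftrightarrow> e \<in> edges D \<and> (p,c,p') \<in> trans A \<and> c \<in> lbl D e"
  "src (run_db D A) (e, (p, c, p')) = (src D e, p)"
  "tgt (run_db D A) (e, (p, c, p')) = (tgt D e, p')"
  by (simp_all add: run_db_def)

lemma run_gen: "(chain (run_db D A) (n, q) (mk q ps) \<and> set (mk q ps) \<subseteq> edges (run_db D A) \<and> lastst q (mk q ps) \<in> final A) \<longleftrightarrow>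
  (chain D n (map fst ps) \<and> set (map fst ps) \<subseteq> edges D \<and> in_walk_lbl D (map (\<lambda>x. snd (snd x)) ps) (map fst ps) \<and> gpath A q (map snd ps))"
proof (induction ps arbitrary: n q)
  case Nil then show ?case by (simp add: lastst_def in_walk_lbl_def)
next
  case (Cons p ps)
  obtain e b where p: "p = (e,b)" by (cases p)
  show ?case using Cons.IH[of "tgt D e" "Some b"] by (auto simp: p run_db_simps lastst_Cons in_walk_lbl_def)
qed

lemma walk_end_snd: "snd (walk_end (run_db D A) ((n, q), es)) = lastst q es"
  by (cases es rule: rev_cases) (auto simp: walk_end_def lastst_def run_db_def split: prod.split)

definition unmk :: "('e \<times> ('q \<times> 's \<times> (nat \<times> 'a) option)) list \<Rightarrow> ('e \<times> (nat \<times> 'a)) list" where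
  "unmk es = map (\<lambda>x. (fst x, the (snd (snd (snd x))))) es"

lemma unmk_mk: "unmk (mk q ps) = ps"
  by (induction ps arbitrary: q) (auto simp: unmk_def)

lemma mk_unmk: "set es \<subseteq> edges (run_db D (Gl R)) \<Longrightarrow> chain (run_db D (Gl R)) (n, q) es \<Longrightarrow> es = mk q (unmk es)"
proof (induction es arbitrary: n q)
  case (Cons x es)
  obtain e p c p' where x: "x = (e, (p, c, p'))" by (cases x) auto
  have t: "(p, c, p') \<in> trans (Gl R)" using Cons.prems(1) unfolding x by (simp add: run_db_simps)
  obtain b where b: "p' = Some b" "c = snd b" using Gl_trans_form[OF t] by (elim exE conjE)
  have pq: "p = q" and ch: "chain (run_db D (Gl R)) (tgt D e, Some b) es"
    using Cons.prems(2) unfolding x b(1) by (simp_all add: run_db_simps)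
  have "es = mk (Some b) (unmk es)" using Cons.IH[OF _ ch] Cons.prems(1) by simp
  then show ?case unfolding x b pq by (simp add: unmk_def)
qed (simp add: unmk_def)

lemma bt_map: "map (\<lambda>(e, (q, a, q')). (e, q')) (mk q ps) = map (\<lambda>(e, b). (e, Some b)) ps"
  by (induction ps arbitrary: q) auto

lemma distinct_mk: "distinct (map (\<lambda>(e, (q, a, q')). (e, q')) (mk q ps)) \<longleftrightarrow> distinct ps"
  unfolding bt_map distinct_map by (auto simp: inj_on_def)

lemma map_fst_mk: "map fst (mk q ps) = map fst ps"
  by (induction ps arbitrary: q) auto

lemma match_mk: "((n, q), mk q ps) \<in> match A D \<longleftrightarrow> n \<in> verts D \<and> q \<in> states A \<and> q \<in> init A \<and>
   chain D n (map fst ps) \<and> set (map fst ps) \<subseteq> edges D \<and> in_walk_lbl D (map (\<lambda>x. snd (snd x)) ps) (map fst ps) \<and> gpath A q (map snd ps)"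
  unfolding match_def mem_Collect_eq is_walk_def fst_conv snd_conv walk_end_snd
  using run_gen[of D A n q ps] by (auto simp: run_db_simps(1))

lemma bag_count_inj: "inj_on f A \<Longrightarrow> bag_count (f ` A) = bag_count A"
  by (simp add: bag_count_def finite_image_iff card_image)


lemma Gl_init: "q \<in> init (Gl R) \<Longrightarrow> q = None"
  by (simp add: Gl_def trim_def statesG2)

theorem lemma28:
  fixes R :: "'a rexp" and D :: "('a, 'v, 'e) db"
  assumes "wf_db D" and "atoms R \<subseteq> alph D"
  shows "BT_sem R D = bag_image proj_run (bindingtrail (match (Gl R) D))"
proof -
  define mkrun :: "'v \<times> ('e \<times> (nat \<times> 'a)) list \<Rightarrow> ('v \<times> (nat \<times> 'a) option) \<times> ('e \<times> ((nat \<times> 'a) option \<times> 'a \<times> (nat \<times> 'a) option)) list"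
    where "mkrun = (\<lambda>t. ((fst t, None), mk None (snd t)))"
  define S where "S = {t. is_binding_trail D R t}"
  have key: "mkrun t \<in> bindingtrail (match (Gl R) D) \<longleftrightarrow> t \<in> S" for t
  proof -
    obtain n ps where t: "t = (n, ps)" by (cases t)
    have m: "mkrun t \<in> match (Gl R) D \<longleftrightarrow> is_walk D (n, map fst ps) \<and> in_walk_lbl D (map (\<lambda>x. snd (snd x)) ps) (map fst ps) \<and> map snd ps \<in> lang (lin R)"
      unfolding mkrun_def t fst_conv snd_conv match_mk Gl_gpath is_walk_def
      using Gl_None[of "map snd ps" R] by auto
    show ?thesis
      unfolding bindingtrail_def mem_Collect_eq m S_def is_binding_trail_def
      by (simp add: mkrun_def t distinct_mk)
  qed
  have inj: "inj mkrun"
  proof (rule injI)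
    fix t t' assume "mkrun t = mkrun t'"
    then have "fst t = fst t'" "unmk (mk None (snd t)) = unmk (mk None (snd t'))" by (simp_all add: mkrun_def)
    then show "t = t'" by (simp add: unmk_mk prod_eq_iff)
  qed
  have img: "bindingtrail (match (Gl R) D) = mkrun ` S"
  proof
    show "mkrun ` S \<subseteq> bindingtrail (match (Gl R) D)" using key by blast
  next
    show "bindingtrail (match (Gl R) D) \<subseteq> mkrun ` S"
    proof
      fix r assume r: "r \<in> bindingtrail (match (Gl R) D)"
      obtain n q es where rr: "r = ((n, q), es)" by (cases r) auto
      have rm: "r \<in> match (Gl R) D" using r by (simp add: bindingtrail_def)
      then have q: "q = None" using Gl_init unfolding match_def rr by auto
      have "set es \<subseteq> edges (run_db D (Gl R))" "chain (run_db D (Gl R)) (n, q) es"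
        using rm unfolding match_def rr is_walk_def by auto
      then have "es = mk q (unmk es)" by (rule mk_unmk)
      then have "r = mkrun (n, unmk es)" unfolding rr mkrun_def q by simp
      then show "r \<in> mkrun ` S" using key r by blast
    qed
  qed
  have proj: "proj_run (mkrun t) = proj_bt t" for t
    by (simp add: mkrun_def proj_run_def proj_bt_def map_fst_mk)
  show ?thesis
    unfolding BT_sem_def bag_image_def img S_def[symmetric]
  proof (rule ext)
    fix w
    have "{r \<in> mkrun ` S. proj_run r = w} = mkrun ` {t \<in> S. proj_bt t = w}" using proj by auto
    moreover have "inj_on mkrun {t \<in> S. proj_bt t = w}" using inj by (rule inj_on_subset) simp
    ultimately show "bag_count {t \<in> S. proj_bt t = w} = bag_count {r \<in> mkrun ` S. proj_run r = w}"
      by (simp add: bag_count_inj)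
  qed
qed

end
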